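(* Let $\mathbb{C}$ be a category with a bounded inclusion system. For each object $A$, let $\eta_A:A\to\mathsf{L}A$ be the maximal inclusion of $A$. Then this assignment makes $\mathbb{C}$ a local category.
   Context: Composition is diagrammatic. An inclusion system on a category is a family $\mathscr{N}$ of morphisms (inclusions) such that (I.1) identities are inclusions; (I.2) inclusions are monic; (I.3) any two parallel inclusions are equal; (I.4) inclusions are closed under composition; (I.5) for every inclusion $m:A\to B$ and every $f:C\to B$ a pullback of $m$ along $f$ exists and its leg $m':D\to C$ is an inclusion. It is bounded if for every object $A$ there exists a unique inclusion $\eta_A:A\to\mathsf{L}A$, called the maximal inclusion of $A$, such that whenever there is an inclusion $\mathsf{L}A\to B$, we have $B=\mathsf{L}A$. A local category is a category with, for each object $M$, an object $\mathsf{L}M$ and a morphism $\eta_M:M\to\mathsf{L}M$ such that (L.1) $\mathsf{L}\mathsf{L}M=\mathsf{L}M$ and $\eta_{\mathsf{L}M}=\mathrm{id}_{\mathsf{L}M}$; (L.2) each $\eta_M$ is monic; (L.3) for every $M$ and every $f:N\to\mathsf{L}M$ a pullback of $\eta_M$ along $f$ exists, with leg $m:P\to N$, such that $\mathsf{L}P=\mathsf{L}N$ and $m\eta_N=\eta_P$. *)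

theory Defs
  imports Main
begin

text \<open>A (small-or-large) category presented by its objects, arrows, domain, codomain,
identities and composition. Composition is diagrammatic: Comp C f g is "f then g",
meaningful when Cod f = Dom g.\<close>

record ('o, 'a) cat =
  Obj  :: "'o set"
  Arr  :: "'a set"
  Dom  :: "'a \<Rightarrow> 'o"
  Cod  :: "'a \<Rightarrow> 'o"
  Idm  :: "'o \<Rightarrow> 'a"
  Comp :: "'a \<Rightarrow> 'a \<Rightarrow> 'a"

definition hom :: "('o, 'a) cat \<Rightarrow> 'o \<Rightarrow> 'o \<Rightarrow> 'a set" where
  "hom C A B = {f \<in> Arr C. Dom C f = A \<and> Cod C f = B}"

definition category :: "('o, 'a) cat \<Rightarrow> bool" where
  "category C \<longleftrightarrow>
     (\<forall>f \<in> Arr C. Dom C f \<in> Obj C \<and> Cod C f \<in> Obj C) \<and>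
     (\<forall>A \<in> Obj C. Idm C A \<in> hom C A A) \<and>
     (\<forall>f \<in> Arr C. \<forall>g \<in> Arr C. Cod C f = Dom C g \<longrightarrow>
         Comp C f g \<in> hom C (Dom C f) (Cod C g)) \<and>
     (\<forall>f \<in> Arr C. Comp C (Idm C (Dom C f)) f = f \<and> Comp C f (Idm C (Cod C f)) = f) \<and>
     (\<forall>f \<in> Arr C. \<forall>g \<in> Arr C. \<forall>h \<in> Arr C. Cod C f = Dom C g \<longrightarrow> Cod C g = Dom C h \<longrightarrow>
         Comp C (Comp C f g) h = Comp C f (Comp C g h))"

definition monic :: "('o, 'a) cat \<Rightarrow> 'a \<Rightarrow> bool" where
  "monic C m \<longleftrightarrow> m \<in> Arr C \<and>
     (\<forall>g \<in> Arr C. \<forall>h \<in> Arr C. Cod C g = Dom C m \<longrightarrow> Cod C h = Dom C m \<longrightarrow>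
        Dom C g = Dom C h \<longrightarrow> Comp C g m = Comp C h m \<longrightarrow> g = h)"

definition is_pullback :: "('o, 'a) cat \<Rightarrow> 'a \<Rightarrow> 'a \<Rightarrow> 'a \<Rightarrow> 'a \<Rightarrow> bool" where
  "is_pullback C m f m' f' \<longleftrightarrow>
     m \<in> Arr C \<and> f \<in> Arr C \<and> Cod C m = Cod C f \<and>
     m' \<in> hom C (Dom C m') (Dom C f) \<and>
     f' \<in> hom C (Dom C m') (Dom C m) \<and>
     Comp C f' m = Comp C m' f \<and>
     (\<forall>x \<in> Arr C. \<forall>y \<in> Arr C.
        Cod C x = Dom C f \<longrightarrow> Cod C y = Dom C m \<longrightarrow> Dom C x = Dom C y \<longrightarrow>
        Comp C x f = Comp C y m \<longrightarrow>
        (\<exists>!u. u \<in> hom C (Dom C x) (Dom C m') \<and> Comp C u m' = x \<and> Comp C u f' = y))"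

definition inclusion_system :: "('o, 'a) cat \<Rightarrow> 'a set \<Rightarrow> bool" where
  "inclusion_system C N \<longleftrightarrow>
     N \<subseteq> Arr C \<and>
     (\<forall>A \<in> Obj C. Idm C A \<in> N) \<and>
     (\<forall>m \<in> N. monic C m) \<and>
     (\<forall>m \<in> N. \<forall>n \<in> N. Dom C m = Dom C n \<longrightarrow> Cod C m = Cod C n \<longrightarrow> m = n) \<and>
     (\<forall>m \<in> N. \<forall>n \<in> N. Cod C m = Dom C n \<longrightarrow> Comp C m n \<in> N) \<and>
     (\<forall>m \<in> N. \<forall>f \<in> Arr C. Cod C f = Cod C m \<longrightarrow>
        (\<exists>m' f'. is_pullback C m f m' f' \<and> m' \<in> N))"

definition maximal_inclusion :: "('o, 'a) cat \<Rightarrow> 'a set \<Rightarrow> 'o \<Rightarrow> 'a \<Rightarrow> bool" where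
  "maximal_inclusion C N A eta \<longleftrightarrow>
     eta \<in> N \<and> Dom C eta = A \<and>
     (\<forall>i \<in> N. Dom C i = Cod C eta \<longrightarrow> Cod C i = Cod C eta)"

definition bounded_inclusion_system :: "('o, 'a) cat \<Rightarrow> 'a set \<Rightarrow> bool" where
  "bounded_inclusion_system C N \<longleftrightarrow>
     inclusion_system C N \<and> (\<forall>A \<in> Obj C. \<exists>!eta. maximal_inclusion C N A eta)"

definition local_category :: "('o, 'a) cat \<Rightarrow> ('o \<Rightarrow> 'o) \<Rightarrow> ('o \<Rightarrow> 'a) \<Rightarrow> bool" where
  "local_category C L eta \<longleftrightarrow>
     category C \<and>
     (\<forall>M \<in> Obj C. L M \<in> Obj C \<and> eta M \<in> hom C M (L M)) \<and>
     (\<forall>M \<in> Obj C. L (L M) = L M \<and> eta (L M) = Idm C (L M)) \<and>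
     (\<forall>M \<in> Obj C. monic C (eta M)) \<and>
     (\<forall>M \<in> Obj C. \<forall>N \<in> Obj C. \<forall>f \<in> hom C N (L M).
        (\<exists>m q. is_pullback C (eta M) f m q \<and>
               L (Dom C m) = L N \<and> Comp C m (eta N) = eta (Dom C m)))"

end

theory Submission
  imports Defs
begin

theorem proposition12p5:
  fixes C :: "('o, 'a) cat" and N :: "'a set"
    and L :: "'o \<Rightarrow> 'o" and eta :: "'o \<Rightarrow> 'a"
  assumes cat: "category C"
    and b: "bounded_inclusion_system C N"
    and e: "\<forall>A \<in> Obj C. maximal_inclusion C N A (eta A) \<and> L A = Cod C (eta A)"
  shows "local_category C L eta"
proof -
  have inc: "inclusion_system C N" and uniq: "\<forall>A \<in> Obj C. \<exists>!eta. maximal_inclusion C N A eta"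
    using b unfolding bounded_inclusion_system_def by auto
  have NA: "N \<subseteq> Arr C" and idN: "\<forall>A \<in> Obj C. Idm C A \<in> N"
    and mon: "\<forall>m \<in> N. monic C m"
    and par: "\<forall>m \<in> N. \<forall>n \<in> N. Dom C m = Dom C n \<longrightarrow> Cod C m = Cod C n \<longrightarrow> m = n"
    and cmp: "\<forall>m \<in> N. \<forall>n \<in> N. Cod C m = Dom C n \<longrightarrow> Comp C m n \<in> N"
    and pb: "\<forall>m \<in> N. \<forall>f \<in> Arr C. Cod C f = Cod C m \<longrightarrow>
        (\<exists>m' f'. is_pullback C m f m' f' \<and> m' \<in> N)"
    using inc unfolding inclusion_system_def by auto
  have ob: "\<forall>f \<in> Arr C. Dom C f \<in> Obj C \<and> Cod C f \<in> Obj C"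
    and idh: "\<forall>A \<in> Obj C. Idm C A \<in> hom C A A"
    and ch: "\<forall>f \<in> Arr C. \<forall>g \<in> Arr C. Cod C f = Dom C g \<longrightarrow>
         Comp C f g \<in> hom C (Dom C f) (Cod C g)"
    using cat unfolding category_def by auto
  have E: "\<And>A. A \<in> Obj C \<Longrightarrow> eta A \<in> N \<and> Dom C (eta A) = A \<and> L A = Cod C (eta A)
      \<and> (\<forall>i \<in> N. Dom C i = Cod C (eta A) \<longrightarrow> Cod C i = Cod C (eta A))"
    using e unfolding maximal_inclusion_def by auto
  have P1: "\<forall>M \<in> Obj C. L M \<in> Obj C \<and> eta M \<in> hom C M (L M)"
  proof
    fix M assume M: "M \<in> Obj C"
    have a: "eta M \<in> Arr C" using E[OF M] NA by blast
    have "L M \<in> Obj C" using ob a E[OF M] by simp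
    thus "L M \<in> Obj C \<and> eta M \<in> hom C M (L M)" using a E[OF M] unfolding hom_def by simp
  qed
  have P2: "\<forall>M \<in> Obj C. L (L M) = L M \<and> eta (L M) = Idm C (L M)"
  proof
    fix M assume M: "M \<in> Obj C"
    have LM: "L M \<in> Obj C" using P1 M by blast
    obtain e1: "eta (L M) \<in> N" and e2: "Dom C (eta (L M)) = L M" and e3: "L (L M) = Cod C (eta (L M))"
      using E[OF LM] by blast
    obtain m3: "L M = Cod C (eta M)" and m4: "\<forall>i \<in> N. Dom C i = Cod C (eta M) \<longrightarrow> Cod C i = Cod C (eta M)"
      using E[OF M] by blast
    have c: "Cod C (eta (L M)) = L M" using m4 e1 e2 m3 by metis
    have i1: "Idm C (L M) \<in> N" using idN LM by blast
    have i2: "Dom C (Idm C (L M)) = L M" "Cod C (Idm C (L M)) = L M" using idh LM unfolding hom_def by auto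
    have "eta (L M) = Idm C (L M)"
      using par e1 i1 e2 i2 c by metis
    thus "L (L M) = L M \<and> eta (L M) = Idm C (L M)" using c e3 by simp
  qed
  have P3: "\<forall>M \<in> Obj C. monic C (eta M)" using E mon by blast
  have P4: "\<forall>M \<in> Obj C. \<forall>Na \<in> Obj C. \<forall>f \<in> hom C Na (L M).
        (\<exists>m q. is_pullback C (eta M) f m q \<and>
               L (Dom C m) = L Na \<and> Comp C m (eta Na) = eta (Dom C m))"
  proof (intro ballI)
    fix M Na f assume M: "M \<in> Obj C" and Na: "Na \<in> Obj C" and f: "f \<in> hom C Na (L M)"
    have fA: "f \<in> Arr C" and fd: "Dom C f = Na" and fc: "Cod C f = Cod C (eta M)"
      using f E[OF M] unfolding hom_def by auto
    obtain m q where p: "is_pullback C (eta M) f m q" and mN: "m \<in> N"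
      using pb E[OF M] fA fc by blast
    have mh: "m \<in> hom C (Dom C m) Na" using p fd unfolding is_pullback_def by simp
    have mA: "m \<in> Arr C" and mc: "Cod C m = Na" using mh unfolding hom_def by auto
    have P: "Dom C m \<in> Obj C" using ob mA by blast
    have cN: "Comp C m (eta Na) \<in> N" using cmp mN E[OF Na] mc by auto
    have ch2: "Comp C m (eta Na) \<in> hom C (Dom C m) (L Na)"
      using ch mA E[OF Na] NA mc by auto
    have mx: "maximal_inclusion C N (Dom C m) (Comp C m (eta Na))"
      using cN ch2 E[OF Na] unfolding maximal_inclusion_def hom_def by auto
    have mx2: "maximal_inclusion C N (Dom C m) (eta (Dom C m))" using e P by blast
    have eq: "Comp C m (eta Na) = eta (Dom C m)" proof -
      have "\<exists>!x. maximal_inclusion C N (Dom C m) x" using uniq P by blast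
      thus ?thesis using mx mx2 by blast
    qed
    have "L (Dom C m) = L Na" using E[OF P] eq ch2 unfolding hom_def by auto
    thus "\<exists>m q. is_pullback C (eta M) f m q \<and>
               L (Dom C m) = L Na \<and> Comp C m (eta Na) = eta (Dom C m)"
      using p eq by blast
  qed
  show ?thesis unfolding local_category_def by (intro conjI cat P1 P2 P3 P4)
qed

end
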